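(* Let $G$ be a tree with at least $2$ vertices. Then a minimum connecting transition set of $G$ has size exactly $|V(G)|-2$.
   Context: All graphs are finite, simple and undirected. A transition of a graph $G$ is an unordered pair $\{ab,bc\}$ of two distinct edges of $G$ sharing the vertex $b$ (so $a\neq c$); it is written $abc$. A walk in $G$ is a sequence $(v_1,\dots,v_k)$ of vertices with $v_iv_{i+1}\in E(G)$ for all $i\le k-1$; it leads from $v_1$ to $v_k$. For a set $T$ of transitions of $G$, a walk $(v_1,\dots,v_k)$ is $T$-compatible if for every $i\in[1,k-2]$, either $v_i=v_{i+2}$ or $v_iv_{i+1}v_{i+2}\in T$. The graph $G$ is $T$-connected, and $T$ is a connecting transition set of $G$, if for all vertices $u,v$ of $G$ there is a $T$-compatible walk leading from $u$ to $v$. A minimum connecting transition set is a connecting transition set of minimum cardinality. *)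

theory Defs
  imports Main
begin

definition simple_graph :: "'a set \<Rightarrow> ('a \<Rightarrow> 'a \<Rightarrow> bool) \<Rightarrow> bool" where
  "simple_graph V E \<longleftrightarrow> finite V \<and> (\<forall>x y. E x y \<longrightarrow> E y x) \<and> (\<forall>x. \<not> E x x)
     \<and> (\<forall>x y. E x y \<longrightarrow> x \<in> V \<and> y \<in> V)"

definition is_walk :: "'a set \<Rightarrow> ('a \<Rightarrow> 'a \<Rightarrow> bool) \<Rightarrow> 'a list \<Rightarrow> bool" where
  "is_walk V E ws \<longleftrightarrow> ws \<noteq> [] \<and> set ws \<subseteq> V \<and> (\<forall>i. Suc i < length ws \<longrightarrow> E (ws ! i) (ws ! Suc i))"

definition connected_graph :: "'a set \<Rightarrow> ('a \<Rightarrow> 'a \<Rightarrow> bool) \<Rightarrow> bool" where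
  "connected_graph V E \<longleftrightarrow> (\<forall>u\<in>V. \<forall>v\<in>V. \<exists>ws. is_walk V E ws \<and> hd ws = u \<and> last ws = v)"

definition has_cycle :: "'a set \<Rightarrow> ('a \<Rightarrow> 'a \<Rightarrow> bool) \<Rightarrow> bool" where
  "has_cycle V E \<longleftrightarrow> (\<exists>cs. length cs \<ge> 3 \<and> distinct cs \<and> is_walk V E cs \<and> E (last cs) (hd cs))"

definition is_tree :: "'a set \<Rightarrow> ('a \<Rightarrow> 'a \<Rightarrow> bool) \<Rightarrow> bool" where
  "is_tree V E \<longleftrightarrow> simple_graph V E \<and> connected_graph V E \<and> \<not> has_cycle V E"

text \<open>A transition abc = {ab, bc} (a \<noteq> c) is represented by its middle vertex b
together with the unordered set {a, c} of its end vertices; this encodes exactly the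
unordered pair of edges {ab, bc}.\<close>
definition transitions :: "('a \<Rightarrow> 'a \<Rightarrow> bool) \<Rightarrow> ('a \<times> 'a set) set" where
  "transitions E = {(b, {a, c}) | a b c. E a b \<and> E b c \<and> a \<noteq> c}"

definition T_compatible :: "('a \<times> 'a set) set \<Rightarrow> 'a list \<Rightarrow> bool" where
  "T_compatible T ws \<longleftrightarrow> (\<forall>i. i + 2 < length ws \<longrightarrow>
      ws ! i = ws ! (i + 2) \<or> (ws ! (i + 1), {ws ! i, ws ! (i + 2)}) \<in> T)"

definition connecting_transition_set ::
  "'a set \<Rightarrow> ('a \<Rightarrow> 'a \<Rightarrow> bool) \<Rightarrow> ('a \<times> 'a set) set \<Rightarrow> bool" where
  "connecting_transition_set V E T \<longleftrightarrow> T \<subseteq> transitions E \<and>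
     (\<forall>u\<in>V. \<forall>v\<in>V. \<exists>ws. is_walk V E ws \<and> T_compatible T ws \<and> hd ws = u \<and> last ws = v)"

definition min_connecting_transition_set ::
  "'a set \<Rightarrow> ('a \<Rightarrow> 'a \<Rightarrow> bool) \<Rightarrow> ('a \<times> 'a set) set \<Rightarrow> bool" where
  "min_connecting_transition_set V E T \<longleftrightarrow> connecting_transition_set V E T \<and>
     (\<forall>T'. connecting_transition_set V E T' \<longrightarrow> card T \<le> card T')"

end

theory Submission
  imports Defs
begin


fun wk :: "('a \<Rightarrow> 'a \<Rightarrow> bool) \<Rightarrow> 'a list \<Rightarrow> bool" where
  "wk E (a # b # r) = (E a b \<and> wk E (b # r))"
| "wk E _ = True"

fun tc :: "('a \<times> 'a set) set \<Rightarrow> 'a list \<Rightarrow> bool" where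
  "tc T (a # b # c # r) = ((a = c \<or> (b, {a, c}) \<in> T) \<and> tc T (b # c # r))"
| "tc T _ = True"

lemma wk_iff: "wk E ws \<longleftrightarrow> (\<forall>i. Suc i < length ws \<longrightarrow> E (ws ! i) (ws ! Suc i))"
proof (induction E ws rule: wk.induct)
  case (1 E a b r)
  show ?case
  proof
    assume "wk E (a # b # r)"
    thus "\<forall>i. Suc i < length (a # b # r) \<longrightarrow> E ((a # b # r) ! i) ((a # b # r) ! Suc i)"
      using 1 by (auto simp: less_Suc_eq_0_disj nth_Cons split: nat.splits)
  next
    assume h: "\<forall>i. Suc i < length (a # b # r) \<longrightarrow> E ((a # b # r) ! i) ((a # b # r) ! Suc i)"
    have "E a b" using h[rule_format, of 0] by simp
    moreover have "\<forall>i. Suc i < length (b # r) \<longrightarrow> E ((b # r) ! i) ((b # r) ! Suc i)"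
      using h by (metis Suc_less_eq length_Cons nth_Cons_Suc)
    ultimately show "wk E (a # b # r)" using 1 by simp
  qed
qed auto

lemma tc_iff: "tc T ws \<longleftrightarrow> T_compatible T ws"
unfolding T_compatible_def
proof (induction T ws rule: tc.induct)
  case (1 T a b c r)
  show ?case
  proof
    assume "tc T (a # b # c # r)"
    thus "\<forall>i. i + 2 < length (a # b # c # r) \<longrightarrow>
      (a # b # c # r) ! i = (a # b # c # r) ! (i + 2) \<or> ((a # b # c # r) ! (i + 1), {(a # b # c # r) ! i, (a # b # c # r) ! (i + 2)}) \<in> T"
      using 1 by (auto simp: nth_Cons split: nat.splits)
  next
    assume h: "\<forall>i. i + 2 < length (a # b # c # r) \<longrightarrow>
      (a # b # c # r) ! i = (a # b # c # r) ! (i + 2) \<or> ((a # b # c # r) ! (i + 1), {(a # b # c # r) ! i, (a # b # c # r) ! (i + 2)}) \<in> T"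
    have "a = c \<or> (b, {a, c}) \<in> T" using h[rule_format, of 0] by simp
    moreover have "\<forall>i. i + 2 < length (b # c # r) \<longrightarrow>
      (b # c # r) ! i = (b # c # r) ! (i + 2) \<or> ((b # c # r) ! (i + 1), {(b # c # r) ! i, (b # c # r) ! (i + 2)}) \<in> T"
    proof (intro allI impI)
      fix i assume "i + 2 < length (b # c # r)"
      then show "(b # c # r) ! i = (b # c # r) ! (i + 2) \<or> ((b # c # r) ! (i + 1), {(b # c # r) ! i, (b # c # r) ! (i + 2)}) \<in> T"
        using h[rule_format, of "Suc i"] by simp
    qed
    ultimately show "tc T (a # b # c # r)" using 1 by simp
  qed
qed auto

lemma walk_iff: "is_walk V E ws \<longleftrightarrow> ws \<noteq> [] \<and> set ws \<subseteq> V \<and> wk E ws"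
  unfolding is_walk_def wk_iff by auto

lemma wk_append: "wk E (xs @ y # ys) \<longleftrightarrow> wk E (xs @ [y]) \<and> wk E (y # ys)"
  by (induction xs rule: induct_list012) auto

lemma tc_append: "tc T (xs @ y # z # ys) \<longleftrightarrow> tc T (xs @ [y, z]) \<and> tc T (y # z # ys)"
proof (induction xs)
  case (Cons x xs)
  show ?case
  proof (cases xs)
    case (Cons x' xs')
    then show ?thesis using Cons.IH by (cases xs') auto
  qed auto
qed auto

lemma wk_mono: "wk E ws \<Longrightarrow> (\<And>x y. E x y \<Longrightarrow> E' x y) \<Longrightarrow> wk E' ws"
  by (induction E ws rule: wk.induct) auto

lemma tc_mono: "tc T ws \<Longrightarrow> T \<subseteq> T' \<Longrightarrow> tc T' ws"
  by (induction T ws rule: tc.induct) auto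

lemma wk_set: "wk E ws \<Longrightarrow> length ws \<ge> 2 \<Longrightarrow> (\<And>x y. E x y \<Longrightarrow> x \<in> V \<and> y \<in> V) \<Longrightarrow> set ws \<subseteq> V"
proof (induction E ws rule: wk.induct)
  case (1 E a b r)
  then have "a \<in> V" "b \<in> V" by auto
  show ?case
  proof (cases r)
    case Nil then show ?thesis using \<open>a \<in> V\<close> \<open>b \<in> V\<close> by simp
  next
    case (Cons c r') then show ?thesis using 1 \<open>a \<in> V\<close> by auto
  qed
qed auto




lemma trans_mem:
  assumes sym: "\<And>x y. E x y \<Longrightarrow> E y x"
  shows "(b, {a, c}) \<in> transitions E \<longleftrightarrow> a \<noteq> c \<and> E a b \<and> E b c"
proof
  assume "(b, {a, c}) \<in> transitions E"
  then obtain a' c' where h: "{a, c} = {a', c'}" "E a' b" "E b c'" "a' \<noteq> c'"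
    unfolding transitions_def by blast
  from h(1) have "(a = a' \<and> c = c') \<or> (a = c' \<and> c = a')" by (simp add: doubleton_eq_iff)
  then show "a \<noteq> c \<and> E a b \<and> E b c" using h sym by blast
next
  assume "a \<noteq> c \<and> E a b \<and> E b c"
  then show "(b, {a, c}) \<in> transitions E" unfolding transitions_def by blast
qed

lemma finite_trans: "simple_graph V E \<Longrightarrow> finite (transitions E)"
proof -
  assume sg: "simple_graph V E"
  have "transitions E \<subseteq> V \<times> Pow V" using sg unfolding simple_graph_def transitions_def by auto
  moreover have "finite V" using sg unfolding simple_graph_def by auto
  then have "finite (V \<times> Pow V)" by simp
  ultimately show ?thesis by (rule finite_subset)
qed

lemma has_nbr:
  assumes sg: "simple_graph V E" and cg: "connected_graph V E" and c2: "card V \<ge> 2" and x: "x \<in> V"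
  shows "\<exists>y. E x y"
proof -
  have "\<exists>v\<in>V. v \<noteq> x"
  proof (rule ccontr)
    assume "\<not> (\<exists>v\<in>V. v \<noteq> x)"
    then have "V = {x}" using x by blast
    then show False using c2 by simp
  qed
  then obtain v where v: "v \<in> V" "v \<noteq> x" by blast
  obtain ws where ws: "is_walk V E ws" "hd ws = x" "last ws = v" using cg x v unfolding connected_graph_def by blast
  then have w: "ws \<noteq> []" "wk E ws" by (auto simp: walk_iff)
  then obtain r where r: "ws = x # r" using ws(2) by (cases ws) auto
  then have "r \<noteq> []" using ws(3) v(2) by auto
  then obtain y r' where "r = y # r'" by (cases r) auto
  then show ?thesis using w(2) r by auto
qed

lemma wk_map: "wk E ws \<Longrightarrow> (\<And>a b. E a b \<Longrightarrow> R (f a) (f b)) \<Longrightarrow> wk R (map f ws)"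
  by (induction E ws rule: wk.induct) auto

lemma wk_remdups: "wk (\<lambda>x y. x = y \<or> R x y) xs \<Longrightarrow> wk R (remdups_adj xs)"
proof (induction xs rule: remdups_adj.induct)
  case (3 x y xs)
  show ?case
  proof (cases "x = y")
    case True
    then show ?thesis using 3 by simp
  next
    case False
    then have "R x y" "wk R (remdups_adj (y # xs))" using 3 by auto
    moreover obtain z zs where zz: "remdups_adj (y # xs) = z # zs"
      by (cases "remdups_adj (y # xs)") auto
    moreover have "z = y" using hd_remdups_adj[of "y # xs"] zz by simp
    ultimately show ?thesis using False by simp
  qed
qed auto

lemma tc_map:
  "wk E ws \<Longrightarrow> tc T ws \<Longrightarrow>
   (\<And>a b c. E a b \<Longrightarrow> E b c \<Longrightarrow> a = c \<or> (b, {a, c}) \<in> T \<Longrightarrow> f a = f c \<or> (f b, {f a, f c}) \<in> T')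
   \<Longrightarrow> tc T' (map f ws)"
  by (induction T ws rule: tc.induct) auto



lemma leaf_exists:
  assumes tree: "is_tree V E" and c2: "card V \<ge> 2"
  shows "\<exists>l p. E l p \<and> (\<forall>y. E l y \<longrightarrow> y = p)"
proof -
  have sg: "simple_graph V E" and cg: "connected_graph V E" and nc: "\<not> has_cycle V E"
    using tree unfolding is_tree_def by auto
  have fin: "finite V" and sym: "\<And>x y. E x y \<Longrightarrow> E y x" and irr: "\<And>x. \<not> E x x"
    and inV: "\<And>x y. E x y \<Longrightarrow> x \<in> V \<and> y \<in> V" using sg unfolding simple_graph_def by auto
  have "V \<noteq> {}" using c2 by auto
  then obtain a where a: "a \<in> V" by blast
  obtain b where ab: "E a b" using has_nbr[OF sg cg c2 a] by blast
  define P where "P k = (\<exists>ws. distinct ws \<and> wk E ws \<and> set ws \<subseteq> V \<and> length ws \<ge> 2 \<and> length ws = k)" for k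
  have "a \<noteq> b" using ab irr by auto
  then have P2: "P 2" unfolding P_def using ab inV
    by (intro exI[of _ "[a,b]"]) auto
  have bound: "\<forall>k. P k \<longrightarrow> k \<le> card V"
  proof (intro allI impI)
    fix k assume "P k"
    then obtain ws where "distinct ws" "set ws \<subseteq> V" "length ws = k" by (auto simp: P_def)
    then show "k \<le> card V" using card_mono[OF fin] distinct_card by metis
  qed
  obtain k where "P k" and kmax: "\<forall>k'. P k' \<longrightarrow> k' \<le> k" using Nat.ex_has_greatest_nat[OF P2 bound] by blast
  then obtain ws where ws: "distinct ws" "wk E ws" "set ws \<subseteq> V" "length ws \<ge> 2" "length ws = k"
    by (auto simp: P_def)
  obtain l y rest where wseq: "ws = l # y # rest"
  proof (cases ws)
    case Nil then show ?thesis using ws(4) by simp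
  next
    case (Cons l r)
    then show ?thesis using ws(4) that by (cases r) auto
  qed
  have ly: "E l y" using ws(2) wseq by simp
  have "\<forall>z. E l z \<longrightarrow> z = y"
  proof (intro allI impI, rule ccontr)
    fix z assume lz: "E l z" and zy: "z \<noteq> y"
    show False
    proof (cases "z \<in> set ws")
      case False
      have "P (Suc k)" unfolding P_def using ws lz inV sym False
        by (intro exI[of _ "z # ws"]) (auto simp: wseq)
      then show False using kmax by fastforce
    next
      case True
      have "z \<noteq> l" using lz irr by auto
      then have "z \<in> set rest" using True zy wseq by auto
      then obtain r1 r2 where rest: "rest = r1 @ z # r2" by (meson split_list)
      define cs where "cs = l # y # r1 @ [z]"
      have "wk E ((l # y # r1) @ z # r2)" using ws(2) wseq rest by simp
      then have w: "wk E cs" using wk_append[of E "l # y # r1" z r2] by (simp add: cs_def)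
      have d: "distinct cs" using ws(1) by (simp add: wseq rest cs_def)
      have s: "set cs \<subseteq> V" using ws(3) by (auto simp: wseq rest cs_def)
      have "length cs \<ge> 3" by (simp add: cs_def)
      moreover have "E (last cs) (hd cs)" using lz sym by (simp add: cs_def)
      ultimately have "has_cycle V E" unfolding has_cycle_def walk_iff using w d s
        by (intro exI[of _ cs]) (auto simp: cs_def)
      with nc show False by simp
    qed
  qed
  then show ?thesis using ly by blast
qed

lemma tree_remove:
  assumes tree: "is_tree V E" and lp: "E l p" and leaf: "\<forall>y. E l y \<longrightarrow> y = p"
  shows "is_tree (V - {l}) (\<lambda>x y. E x y \<and> x \<noteq> l \<and> y \<noteq> l)"
proof -
  define E' where "E' = (\<lambda>x y. E x y \<and> x \<noteq> l \<and> y \<noteq> l)"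
  have sg: "simple_graph V E" and cg: "connected_graph V E" and nc: "\<not> has_cycle V E"
    using tree unfolding is_tree_def by auto
  have fin: "finite V" and sym: "\<And>x y. E x y \<Longrightarrow> E y x" and irr: "\<And>x. \<not> E x x"
    and inV: "\<And>x y. E x y \<Longrightarrow> x \<in> V \<and> y \<in> V" using sg unfolding simple_graph_def by auto
  have pl: "p \<noteq> l" using irr lp by auto
  have pV: "p \<in> V" using inV lp by auto
  have sg': "simple_graph (V - {l}) E'" unfolding simple_graph_def E'_def using fin sym irr inV by auto
  have cg': "connected_graph (V - {l}) E'"
    unfolding connected_graph_def
  proof (intro ballI)
    fix u v assume u: "u \<in> V - {l}" and v: "v \<in> V - {l}"
    obtain ws where ws: "is_walk V E ws" "hd ws = u" "last ws = v"
      using cg u v unfolding connected_graph_def by blast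
    then have w: "ws \<noteq> []" "set ws \<subseteq> V" "wk E ws" by (auto simp: walk_iff)
    define f where "f x = (if x = l then p else x)" for x
    have "wk (\<lambda>x y. x = y \<or> E' x y) (map f ws)"
    proof (rule wk_map[OF w(3)])
      fix a b assume ab: "E a b"
      show "f a = f b \<or> E' (f a) (f b)"
      proof (cases "a = l")
        case True then show ?thesis using ab leaf pl by (auto simp: f_def)
      next
        case False
        show ?thesis
        proof (cases "b = l")
          case True then have "a = p" using ab leaf sym by blast
          then show ?thesis using True pl by (auto simp: f_def)
        next
          case False then show ?thesis using ab \<open>a \<noteq> l\<close> by (auto simp: f_def E'_def)
        qed
      qed
    qed
    then have "wk E' (remdups_adj (map f ws))" by (rule wk_remdups)
    moreover have "set (remdups_adj (map f ws)) \<subseteq> V - {l}" using w(2) pV pl by (auto simp: f_def)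
    moreover have "hd (remdups_adj (map f ws)) = u" using w(1) ws(2) u by (simp add: hd_map f_def)
    moreover have "last (remdups_adj (map f ws)) = v" using w(1) ws(3) v by (simp add: last_map f_def)
    ultimately show "\<exists>ws. is_walk (V - {l}) E' ws \<and> hd ws = u \<and> last ws = v"
      using w(1) by (intro exI[of _ "remdups_adj (map f ws)"]) (auto simp: walk_iff)
  qed
  have nc': "\<not> has_cycle (V - {l}) E'"
  proof
    assume "has_cycle (V - {l}) E'"
    then obtain cs where "length cs \<ge> 3" "distinct cs" "is_walk (V - {l}) E' cs" "E' (last cs) (hd cs)"
      unfolding has_cycle_def by blast
    then have "has_cycle V E" unfolding has_cycle_def walk_iff
      by (intro exI[of _ cs]) (auto simp: E'_def intro: wk_mono)
    with nc show False by simp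
  qed
  show ?thesis unfolding is_tree_def using sg' cg' nc' by (simp add: E'_def)
qed




definition R :: "('a \<Rightarrow> 'a \<Rightarrow> bool) \<Rightarrow> ('a \<times> 'a set) set \<Rightarrow> 'a \<Rightarrow> 'a \<Rightarrow> 'a \<Rightarrow> 'a \<Rightarrow> bool" where
  "R E T x y z w \<longleftrightarrow> (\<exists>ws. wk E ws \<and> tc T ws \<and> (\<exists>a. ws = x # y # a) \<and> (\<exists>b. ws = b @ [z, w]))"

lemma R_glue:
  assumes "R E T x y z w" "R E T z w s t" shows "R E T x y s t"
proof -
  obtain ws1 a1 b1 where 1: "wk E ws1" "tc T ws1" "ws1 = x # y # a1" "ws1 = b1 @ [z, w]"
    using assms(1) unfolding R_def by blast
  obtain ws2 a2 b2 where 2: "wk E ws2" "tc T ws2" "ws2 = z # w # a2" "ws2 = b2 @ [s, t]"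
    using assms(2) unfolding R_def by blast
  have "wk E (b1 @ z # [w])" using 1 by simp
  then have "wk E (b1 @ [z])" using wk_append[of E b1 z "[w]"] by simp
  then have w: "wk E (b1 @ z # w # a2)" using 2 wk_append[of E b1 z "w # a2"] by simp
  have t: "tc T (b1 @ z # w # a2)" using 1 2 tc_append[of T b1 z w a2] by simp
  have s: "b1 @ z # w # a2 = x # y # (a1 @ a2)" using 1 by (metis append.assoc append_Cons append_Nil)
  have e: "b1 @ z # w # a2 = (b1 @ b2) @ [s, t]" using 2 by simp
  have s': "\<exists>a. b1 @ z # w # a2 = x # y # a" by (rule exI[of _ "a1 @ a2"], fact s)
  have e': "\<exists>b. b1 @ z # w # a2 = b @ [s, t]" by (rule exI[of _ "b1 @ b2"], fact e)
  show ?thesis unfolding R_def by (rule exI[of _ "b1 @ z # w # a2"], intro conjI w t s' e')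
qed

lemma R_mono: "R E T x y z w \<Longrightarrow> (\<And>a b. E a b \<Longrightarrow> E2 a b) \<Longrightarrow> T \<subseteq> T2 \<Longrightarrow> R E2 T2 x y z w"
proof -
  assume r: "R E T x y z w" and m: "\<And>a b. E a b \<Longrightarrow> E2 a b" and tt: "T \<subseteq> T2"
  obtain ws where ws: "wk E ws" "tc T ws" "\<exists>a. ws = x # y # a" "\<exists>b. ws = b @ [z, w]"
    using r unfolding R_def by blast
  have "wk E2 ws" using wk_mono[OF ws(1)] m by blast
  moreover have "tc T2 ws" using tc_mono[OF ws(2) tt] .
  ultimately show ?thesis unfolding R_def using ws(3,4) by blast
qed

lemma R_edge: "E x y \<Longrightarrow> R E T x y x y"
  unfolding R_def by (intro exI[of _ "[x,y]"]) auto

lemma R_back: "E x y \<Longrightarrow> E y x \<Longrightarrow> R E T x y y x"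
  unfolding R_def by (intro exI[of _ "[x,y,x]"]) auto

lemma R_turn: "E x y \<Longrightarrow> E y z \<Longrightarrow> (y, {x, z}) \<in> T \<Longrightarrow> R E T x y y z"
  unfolding R_def by (intro exI[of _ "[x,y,z]"]) auto

definition PP :: "('a \<Rightarrow> 'a \<Rightarrow> bool) \<Rightarrow> ('a \<times> 'a set) set \<Rightarrow> bool" where
  "PP E T \<longleftrightarrow> (\<forall>x y z w. E x y \<longrightarrow> E z w \<longrightarrow> R E T x y z w)"

lemma PP_connecting:
  assumes sg: "simple_graph V E" and cg: "connected_graph V E" and c2: "card V \<ge> 2"
    and TT: "T \<subseteq> transitions E" and pp: "PP E T"
  shows "connecting_transition_set V E T"
  unfolding connecting_transition_set_def
proof (intro conjI TT ballI)
  fix u v assume u: "u \<in> V" and v: "v \<in> V"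
  have sym: "\<And>x y. E x y \<Longrightarrow> E y x" and inV: "\<And>x y. E x y \<Longrightarrow> x \<in> V \<and> y \<in> V"
    using sg unfolding simple_graph_def by auto
  obtain u' where uu: "E u u'" using has_nbr[OF sg cg c2 u] by blast
  obtain v' where vv: "E v' v" using has_nbr[OF sg cg c2 v] sym by blast
  have "R E T u u' v' v" using pp uu vv unfolding PP_def by blast
  then obtain ws a b where ws: "wk E ws" "tc T ws" "ws = u # u' # a" "ws = b @ [v', v]"
    unfolding R_def by blast
  have lw: "last ws = v" using ws(4) by simp
  have hw: "hd ws = u" using ws(3) by simp
  have "set ws \<subseteq> V" using wk_set[OF ws(1) _ inV] ws(3) by simp
  then show "\<exists>ws. is_walk V E ws \<and> T_compatible T ws \<and> hd ws = u \<and> last ws = v"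
    using ws(1,2) lw hw ws(3) by (intro exI[of _ ws]) (auto simp: walk_iff tc_iff[symmetric])
qed

lemma PP_base:
  assumes ab: "E a b" "E b a" and only: "\<And>x y. E x y \<Longrightarrow> (x = a \<and> y = b) \<or> (x = b \<and> y = a)"
  shows "PP E T"
  unfolding PP_def
proof (intro allI impI)
  fix x y z w assume xy: "E x y" and zw: "E z w"
  have Ea: "R E T a b a b" "R E T a b b a" "R E T b a b a" "R E T b a a b"
    using R_edge[of E a b T] R_back[of E a b T] R_edge[of E b a T] R_back[of E b a T] ab by auto
  show "R E T x y z w"
    using only[OF xy] only[OF zw] Ea by (elim disjE conjE) simp_all
qed

lemma PP_step:
  assumes sym: "\<And>x y. E x y \<Longrightarrow> E y x" and pp: "PP E' T'"
    and E'def: "E' = (\<lambda>x y. E x y \<and> x \<noteq> l \<and> y \<noteq> l)"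
    and lp: "E l p" and leaf: "\<forall>y. E l y \<longrightarrow> y = p" and pq: "E' p q"
  shows "PP E (insert (p, {l, q}) T')"
proof -
  define T where "T = insert (p, {l, q}) T'"
  have IH: "R E T x y z w" if "E' x y" "E' z w" for x y z w
  proof -
    have "R E' T' x y z w" using pp that unfolding PP_def by blast
    moreover have "\<And>a b. E' a b \<Longrightarrow> E a b" using E'def by simp
    moreover have "T' \<subseteq> T" unfolding T_def by blast
    ultimately show ?thesis by (rule R_mono)
  qed
  have qp: "E' q p" using pq sym E'def by auto
  have Epq: "E p q" "E q p" using pq qp E'def by auto
  have Epl: "E p l" using lp sym by auto
  have r1: "R E T q p p l" using R_turn[of E q p l T] Epq Epl unfolding T_def by (simp add: insert_commute)
  have r2: "R E T p l l p" using R_back[of E p l] Epl lp by simp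
  have r3: "R E T l p p q" using R_turn[of E l p q T] Epq lp unfolding T_def by simp
  have pqqp: "R E T p q q p" using IH pq qp by blast
  have to: "R E T x y q p" if xy: "E x y" for x y
  proof (cases "x = l")
    case True
    then have "y = p" using leaf xy by auto
    then show ?thesis using True r3 pqqp R_glue by metis
  next
    case False
    show ?thesis
    proof (cases "y = l")
      case True
      then have "x = p" using leaf xy sym by blast
      then show ?thesis using True r2 r3 pqqp R_glue by metis
    next
      case False
      then show ?thesis using IH qp xy \<open>x \<noteq> l\<close> E'def by auto
    qed
  qed
  have frm: "R E T p q z w" if zw: "E z w" for z w
  proof (cases "z = l")
    case True
    then have "w = p" using leaf zw by auto
    then show ?thesis using True r1 r2 pqqp R_glue by metis
  next
    case False
    show ?thesis
    proof (cases "w = l")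
      case True
      then have "z = p" using leaf zw sym by blast
      then show ?thesis using True r1 pqqp R_glue by metis
    next
      case False
      then show ?thesis using IH pq zw \<open>z \<noteq> l\<close> E'def by auto
    qed
  qed
  show ?thesis unfolding PP_def T_def[symmetric]
  proof (intro allI impI)
    fix x y z w assume "E x y" "E z w"
    then show "R E T x y z w" using to frm r1 r2 r3 R_glue by metis
  qed
qed




lemma tc_Cons: "tc T (a # r) \<Longrightarrow> tc T r"
  by (cases "(T, r)" rule: tc.cases) auto

lemma find_turn:
  "wk E ws \<Longrightarrow> tc T ws \<Longrightarrow> ws \<noteq> [] \<Longrightarrow> hd ws = l \<Longrightarrow> last ws \<noteq> l \<Longrightarrow> last ws \<noteq> p
   \<Longrightarrow> \<forall>y. E l y \<longrightarrow> y = p \<Longrightarrow> \<exists>y. y \<noteq> l \<and> (p, {l, y}) \<in> T"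
proof (induction ws rule: induct_list012)
  case (3 x y zs)
  have xl: "x = l" using "3.prems"(4) by simp
  have "E x y" using "3.prems"(1) by simp
  then have yp: "y = p" using "3.prems"(7) xl by simp
  have "zs \<noteq> []"
  proof
    assume "zs = []"
    then show False using "3.prems"(6) yp by simp
  qed
  then obtain c r where zs: "zs = c # r" by (cases zs) auto
  show ?case
  proof (cases "c = l")
    case False
    have "x = c \<or> (y, {x, c}) \<in> T" using "3.prems"(2) zs by simp
    then show ?thesis using False xl yp by auto
  next
    case True
    have "wk E zs" using "3.prems"(1) zs by simp
    moreover have "tc T zs" using "3.prems"(2) tc_Cons[of T y zs] tc_Cons[of T x "y # zs"] by blast
    moreover have "hd zs = l" using True zs by simp
    moreover have "last zs = last (x # y # zs)" using zs by simp
    ultimately show ?thesis using "3.IH"(1) "3.prems"(5,6,7) zs by simp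
  qed
qed auto

lemma lower_step:
  assumes tree: "is_tree V E" and E'def: "E' = (\<lambda>x y. E x y \<and> x \<noteq> l \<and> y \<noteq> l)"
    and lp: "E l p" and leaf: "\<forall>y. E l y \<longrightarrow> y = p" and pq: "E' p q"
    and conn: "connecting_transition_set V E T"
  shows "\<exists>T'. connecting_transition_set (V - {l}) E' T' \<and> card T' + 1 \<le> card T"
proof -
  have sg: "simple_graph V E" using tree unfolding is_tree_def by auto
  have fin: "finite V" and sym: "\<And>x y. E x y \<Longrightarrow> E y x" and irr: "\<And>x. \<not> E x x"
    and inV: "\<And>x y. E x y \<Longrightarrow> x \<in> V \<and> y \<in> V" using sg unfolding simple_graph_def by auto
  have TT: "T \<subseteq> transitions E" using conn unfolding connecting_transition_set_def by auto
  have finT: "finite T" using finite_subset[OF TT finite_trans[OF sg]] .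
  have pl: "p \<noteq> l" using lp irr by auto
  have Epq: "E p q" "q \<noteq> l" "q \<noteq> p" using pq E'def irr by auto
  have qV: "q \<in> V" using inV Epq by auto
  have lV: "l \<in> V" using inV lp by auto
  define X where "X = {x. (p, {l, x}) \<in> T}"
  have Xf: "x \<noteq> l \<and> E p x" if "x \<in> X" for x
  proof -
    have "(p, {l, x}) \<in> transitions E" using that TT unfolding X_def by auto
    then show ?thesis using trans_mem[of E p l x] sym by auto
  qed
  have finX: "finite X" using Xf inV fin by (metis finite_subset subsetI)
  obtain ws where ws: "is_walk V E ws" "T_compatible T ws" "hd ws = l" "last ws = q"
    using conn lV qV unfolding connecting_transition_set_def by blast
  have "\<exists>y. y \<noteq> l \<and> (p, {l, y}) \<in> T"
    using find_turn[of E ws T l p] ws Epq leaf by (auto simp: walk_iff tc_iff)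
  then obtain x0 where x0: "x0 \<in> X" unfolding X_def by blast
  have x0f: "x0 \<noteq> l" "E p x0" using Xf[OF x0] by auto
  define A where "A = {t \<in> T. l \<notin> snd t}"
  define B where "B = {t \<in> T. l \<in> snd t}"
  define N where "N = (\<lambda>x. (p, {x0, x})) ` (X - {x0})"
  define T' where "T' = A \<union> N"
  have cardT: "card T = card A + card B"
  proof -
    have "T = A \<union> B" "A \<inter> B = {}" unfolding A_def B_def by auto
    then show ?thesis using finT card_Un_disjoint[of A B] by (metis finite_Un)
  qed
  have XB: "card X \<le> card B"
  proof (rule card_inj_on_le[of "\<lambda>x. (p, {l, x})"])
    show "inj_on (\<lambda>x. (p, {l, x})) X"
    proof (rule inj_onI)
      fix x y assume "x \<in> X" "y \<in> X" "(p, {l, x}) = (p, {l, y})"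
      then show "x = y" using Xf by (auto simp: doubleton_eq_iff)
    qed
    show "(\<lambda>x. (p, {l, x})) ` X \<subseteq> B" unfolding B_def X_def by auto
    show "finite B" unfolding B_def using finT by auto
  qed
  have cardN: "card N \<le> card X - 1"
  proof -
    have "card N \<le> card (X - {x0})" unfolding N_def by (rule card_image_le) (use finX in auto)
    also have "\<dots> = card X - 1" using x0 finX by simp
    finally show ?thesis .
  qed
  have "card X \<ge> 1" using x0 finX by (metis One_nat_def Suc_leI card_gt_0_iff empty_iff)
  have "card T' \<le> card A + card N" unfolding T'_def by (rule card_Un_le)
  then have card': "card T' + 1 \<le> card T" using cardT XB cardN \<open>card X \<ge> 1\<close> by linarith
  have symE': "\<And>x y. E' x y \<Longrightarrow> E' y x" using sym E'def by auto
  have TT': "T' \<subseteq> transitions E'"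
  proof
    fix t assume t: "t \<in> T'"
    show "t \<in> transitions E'"
    proof (cases "t \<in> A")
      case True
      then have "t \<in> transitions E" "l \<notin> snd t" using TT unfolding A_def by auto
      then obtain a b c where abc: "t = (b, {a, c})" "E a b" "E b c" "a \<noteq> c" "a \<noteq> l" "c \<noteq> l"
        unfolding transitions_def by auto
      have "b \<noteq> l"
      proof
        assume "b = l"
        then have "a = p" "c = p" using abc leaf sym by auto
        then show False using abc by simp
      qed
      then show ?thesis using abc E'def unfolding transitions_def by auto
    next
      case False
      then have "t \<in> N" using t unfolding T'_def by auto
      then obtain x where x: "x \<in> X" "x \<noteq> x0" "t = (p, {x0, x})" unfolding N_def by auto
      have "E' x0 p" "E' p x" using Xf[OF x(1)] x0f pl sym E'def by auto
      then show ?thesis using x trans_mem[of E' p x0 x, OF symE'] by auto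
    qed
  qed
  have conn': "connecting_transition_set (V - {l}) E' T'"
    unfolding connecting_transition_set_def
  proof (intro conjI TT' ballI)
    fix u v assume u: "u \<in> V - {l}" and v: "v \<in> V - {l}"
    obtain ws where ws: "is_walk V E ws" "T_compatible T ws" "hd ws = u" "last ws = v"
      using conn u v unfolding connecting_transition_set_def by blast
    then have w: "ws \<noteq> []" "set ws \<subseteq> V" "wk E ws" "tc T ws" by (auto simp: walk_iff tc_iff)
    define f where "f x = (if x = l then x0 else x)" for x
    have "wk E' (map f ws)"
    proof (rule wk_map[OF w(3)])
      fix a b assume ab: "E a b"
      show "E' (f a) (f b)"
      proof (cases "a = l")
        case True
        then have "b = p" using leaf ab by auto
        then show ?thesis using True x0f pl sym E'def by (auto simp: f_def)
      next
        case False
        show ?thesis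
        proof (cases "b = l")
          case True
          then have "a = p" using leaf ab sym by blast
          then show ?thesis using True x0f pl E'def by (auto simp: f_def)
        next
          case False
          then show ?thesis using ab \<open>a \<noteq> l\<close> E'def by (auto simp: f_def)
        qed
      qed
    qed
    moreover have "tc T' (map f ws)"
    proof (rule tc_map[OF w(3) w(4)])
      fix a b c assume ab: "E a b" and bc: "E b c" and h: "a = c \<or> (b, {a, c}) \<in> T"
      show "f a = f c \<or> (f b, {f a, f c}) \<in> T'"
      proof (cases "a = c")
        case True then show ?thesis by simp
      next
        case False
        then have bac: "(b, {a, c}) \<in> T" using h by simp
        show ?thesis
        proof (cases "b = l")
          case True
          then have "a = p" "c = p" using ab bc leaf sym by auto
          then show ?thesis using False by simp
        next
          case bl: False
          show ?thesis
          proof (cases "a = l")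
            case True
            then have bp: "b = p" using ab leaf by auto
            have "c \<in> X" using bac True bp unfolding X_def by simp
            then show ?thesis
              using True bp bl unfolding f_def T'_def N_def by auto
          next
            case al: False
            show ?thesis
            proof (cases "c = l")
              case True
              then have bp: "b = p" using bc leaf sym by auto
              have "a \<in> X" using bac True bp unfolding X_def by (simp add: insert_commute)
              then show ?thesis
                using True bp bl al unfolding f_def T'_def N_def by (auto simp: insert_commute)
            next
              case False
              then have "(b, {a, c}) \<in> A" using bac al unfolding A_def by simp
              then show ?thesis using False al bl unfolding f_def T'_def by simp
            qed
          qed
        qed
      qed
    qed
    moreover have "set (map f ws) \<subseteq> V - {l}" using w(2) x0f inV by (auto simp: f_def)
    moreover have "hd (map f ws) = u" using w(1) ws(3) u by (simp add: hd_map f_def)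
    moreover have "last (map f ws) = v" using w(1) ws(4) v by (simp add: last_map f_def)
    ultimately show "\<exists>ws. is_walk (V - {l}) E' ws \<and> T_compatible T' ws \<and> hd ws = u \<and> last ws = v"
      using w(1) by (intro exI[of _ "map f ws"]) (auto simp: walk_iff tc_iff[symmetric])
  qed
  show ?thesis using conn' card' by blast
qed




lemma main_ind:
  "\<forall>(V :: 'a set) E. is_tree V E \<longrightarrow> card V = n + 2 \<longrightarrow>
     (\<exists>T. T \<subseteq> transitions E \<and> PP E T \<and> card T = n) \<and>
     (\<forall>T. connecting_transition_set V E T \<longrightarrow> n \<le> card T)"
proof (induction n)
  case 0
  show ?case
  proof (intro allI impI conjI)
    fix V :: "'a set" and E assume tree: "is_tree V E" and c: "card V = 0 + 2"
    have sg: "simple_graph V E" and cg: "connected_graph V E" using tree unfolding is_tree_def by auto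
    have sym: "\<And>x y. E x y \<Longrightarrow> E y x" and irr: "\<And>x. \<not> E x x"
      and inV: "\<And>x y. E x y \<Longrightarrow> x \<in> V \<and> y \<in> V" using sg unfolding simple_graph_def by auto
    obtain a b where V: "V = {a, b}" "a \<noteq> b" using c card_2_iff[of V] by (metis add_0 numeral_2_eq_2)
    obtain y where "E a y" using has_nbr[OF sg cg] c V by auto
    then have ab: "E a b" using inV irr V by (metis insert_iff singletonD)
    have only: "(x = a \<and> y = b) \<or> (x = b \<and> y = a)" if "E x y" for x y
      using that inV irr V by (metis insert_iff singletonD)
    have "PP E {}" by (rule PP_base[of E a b]) (use ab sym only in auto)
    then show "\<exists>T. T \<subseteq> transitions E \<and> PP E T \<and> card T = 0" by auto
  qed simp
next
  case (Suc m)
  show ?case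
  proof (intro allI impI)
    fix V :: "'a set" and E assume tree: "is_tree V E" and c: "card V = Suc m + 2"
    have sg: "simple_graph V E" using tree unfolding is_tree_def by auto
    have fin: "finite V" and sym: "\<And>x y. E x y \<Longrightarrow> E y x" and irr: "\<And>x. \<not> E x x"
      and inV: "\<And>x y. E x y \<Longrightarrow> x \<in> V \<and> y \<in> V" using sg unfolding simple_graph_def by auto
    obtain l p where lp: "E l p" and leaf: "\<forall>y. E l y \<longrightarrow> y = p"
      using leaf_exists[OF tree] c by auto
    define E' where "E' = (\<lambda>x y. E x y \<and> x \<noteq> l \<and> y \<noteq> l)"
    have tree': "is_tree (V - {l}) E'" using tree_remove[OF tree lp leaf] unfolding E'_def .
    have sg': "simple_graph (V - {l}) E'" and cg': "connected_graph (V - {l}) E'"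
      using tree' unfolding is_tree_def by auto
    have lV: "l \<in> V" "p \<in> V" using inV lp by auto
    have pl: "p \<noteq> l" using lp irr by auto
    have c': "card (V - {l}) = m + 2" using c lV fin by simp
    obtain q where pq: "E' p q" using has_nbr[OF sg' cg'] c' lV pl by auto
    have IH: "(\<exists>T. T \<subseteq> transitions E' \<and> PP E' T \<and> card T = m) \<and>
      (\<forall>T. connecting_transition_set (V - {l}) E' T \<longrightarrow> m \<le> card T)"
      using Suc.IH tree' c' by blast
    then obtain T' where T': "T' \<subseteq> transitions E'" "PP E' T'" "card T' = m" by blast
    have Epq: "E p q" "q \<noteq> l" using pq by (auto simp: E'_def)
    show "(\<exists>T. T \<subseteq> transitions E \<and> PP E T \<and> card T = Suc m) \<and>
       (\<forall>T. connecting_transition_set V E T \<longrightarrow> Suc m \<le> card T)"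
    proof (intro conjI allI impI)
      have "transitions E' \<subseteq> transitions E" unfolding transitions_def E'_def by blast
      moreover have "(p, {l, q}) \<in> transitions E" using trans_mem[of E p l q] sym lp Epq by auto
      ultimately have "insert (p, {l, q}) T' \<subseteq> transitions E" using T'(1) by blast
      moreover have "PP E (insert (p, {l, q}) T')"
        using PP_step[OF sym T'(2) E'_def lp leaf pq] .
      moreover have "card (insert (p, {l, q}) T') = Suc m"
      proof -
        have "finite T'" using finite_subset[OF T'(1) finite_trans[OF sg']] .
        moreover have "(p, {l, q}) \<notin> T'"
        proof
          assume "(p, {l, q}) \<in> T'"
          then have "(p, {l, q}) \<in> transitions E'" using T'(1) by blast
          then show False unfolding transitions_def E'_def by (auto simp: doubleton_eq_iff)
        qed
        ultimately show ?thesis using T'(3) by simp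
      qed
      ultimately show "\<exists>T. T \<subseteq> transitions E \<and> PP E T \<and> card T = Suc m" by blast
    next
      fix T assume conn: "connecting_transition_set V E T"
      obtain T'' where "connecting_transition_set (V - {l}) E' T''" "card T'' + 1 \<le> card T"
        using lower_step[OF tree E'_def lp leaf pq conn] by blast
      then show "Suc m \<le> card T" using IH by fastforce
    qed
  qed
qed

theorem lemma1:
  fixes V :: "'a set" and E :: "'a \<Rightarrow> 'a \<Rightarrow> bool"
  assumes "is_tree V E" and "card V \<ge> 2"
  shows "(\<exists>T. min_connecting_transition_set V E T) \<and>
         (\<forall>T. min_connecting_transition_set V E T \<longrightarrow> card T = card V - 2)"
proof -
  have c: "card V = (card V - 2) + 2" using assms(2) by simp
  have sg: "simple_graph V E" and cg: "connected_graph V E" using assms(1) unfolding is_tree_def by auto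
  have M: "(\<exists>T. T \<subseteq> transitions E \<and> PP E T \<and> card T = card V - 2) \<and>
     (\<forall>T. connecting_transition_set V E T \<longrightarrow> card V - 2 \<le> card T)"
    using main_ind[of "card V - 2"] assms(1) c by blast
  then obtain T0 where T0: "T0 \<subseteq> transitions E" "PP E T0" "card T0 = card V - 2" by blast
  have conn0: "connecting_transition_set V E T0" using PP_connecting[OF sg cg assms(2) T0(1,2)] .
  have min0: "min_connecting_transition_set V E T0"
    unfolding min_connecting_transition_set_def using conn0 M T0(3) by auto
  show ?thesis
  proof (intro conjI allI impI)
    show "\<exists>T. min_connecting_transition_set V E T" using min0 by blast
  next
    fix T assume "min_connecting_transition_set V E T"
    then have "connecting_transition_set V E T" "card T \<le> card T0"
      unfolding min_connecting_transition_set_def using conn0 by auto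
    then show "card T = card V - 2" using M T0(3) by fastforce
  qed
qed


end
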